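(* Let $\kappa$ be a regular uncountable cardinal and let $\langle T^\eta\mid\eta<\kappa\rangle$ be a sequence of streamlined $\kappa$-subtrees of a given streamlined $\kappa$-Souslin tree $T$. Then there are $\eta<\rho<\kappa$ such that $|T^\eta\cap T^\rho|=\kappa$.
   Context: $H_\kappa$ is the collection of sets of hereditary cardinality $<\kappa$. A streamlined tree is a set $T\subseteq{}^{<\kappa}H_\kappa$ closed under restrictions $t\mapsto t\restriction\beta$, ordered by proper initial segment; $T_\alpha=\{x\in T\mid\mathrm{dom}(x)=\alpha\}$. A streamlined $\kappa$-tree satisfies $0<|T_\alpha|<\kappa$ for all $\alpha<\kappa$; a streamlined $\kappa$-subtree of $T$ is a downward-closed subset of $T$ that is itself a streamlined $\kappa$-tree. A streamlined $\kappa$-Souslin tree is a streamlined $\kappa$-tree with no $f:\kappa\to H_\kappa$ such that $f\restriction\beta\in T$ for all $\beta<\kappa$, and with no antichain (set of pairwise $\subseteq$-incomparable nodes) of size $\kappa$. *)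

theory Defs
  imports Main "HOL-Library.Countable_Set"
begin

text \<open>The cardinal kappa is represented by a cardinal well-order r on a type 'k;
  ordinals below kappa are the elements of Field r, and the ordinal alpha
  is identified with its set of predecessors underS r alpha.
  Nodes x : alpha -> H_kappa are partial maps 'k to 'v with domain underS r alpha
  (values range over an arbitrary type 'v standing for H_kappa).\<close>

definition kappa_regular_uncountable :: "'k rel \<Rightarrow> bool" where
  "kappa_regular_uncountable r \<longleftrightarrow>
     Card_order r \<and> regularCard r \<and> \<not> countable (Field r)"

definition node_of_height :: "'k rel \<Rightarrow> 'k \<Rightarrow> ('k \<rightharpoonup> 'v) \<Rightarrow> bool" where
  "node_of_height r \<alpha> x \<longleftrightarrow> \<alpha> \<in> Field r \<and> dom x = underS r \<alpha>"

definition restr :: "'k rel \<Rightarrow> ('k \<rightharpoonup> 'v) \<Rightarrow> 'k \<Rightarrow> ('k \<rightharpoonup> 'v)" where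
  "restr r x \<beta> = x |` underS r \<beta>"

definition level :: "'k rel \<Rightarrow> ('k \<rightharpoonup> 'v) set \<Rightarrow> 'k \<Rightarrow> ('k \<rightharpoonup> 'v) set" where
  "level r T \<alpha> = {x \<in> T. dom x = underS r \<alpha>}"

definition streamlined_tree :: "'k rel \<Rightarrow> ('k \<rightharpoonup> 'v) set \<Rightarrow> bool" where
  "streamlined_tree r T \<longleftrightarrow>
     (\<forall>x \<in> T. \<exists>\<alpha>. node_of_height r \<alpha> x) \<and>
     (\<forall>x \<in> T. \<forall>\<alpha> \<beta>. node_of_height r \<alpha> x \<and> (\<beta>, \<alpha>) \<in> r \<longrightarrow> restr r x \<beta> \<in> T)"

definition streamlined_kappa_tree :: "'k rel \<Rightarrow> ('k \<rightharpoonup> 'v) set \<Rightarrow> bool" where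
  "streamlined_kappa_tree r T \<longleftrightarrow> streamlined_tree r T \<and>
     (\<forall>\<alpha> \<in> Field r. level r T \<alpha> \<noteq> {} \<and> (card_of (level r T \<alpha>), r) \<in> ordLess)"

definition streamlined_kappa_subtree :: "'k rel \<Rightarrow> ('k \<rightharpoonup> 'v) set \<Rightarrow> ('k \<rightharpoonup> 'v) set \<Rightarrow> bool" where
  "streamlined_kappa_subtree r S T \<longleftrightarrow> S \<subseteq> T \<and>
     (\<forall>y \<in> S. \<forall>x \<in> T. x \<subseteq>\<^sub>m y \<longrightarrow> x \<in> S) \<and>
     streamlined_kappa_tree r S"

definition antichain :: "('k \<rightharpoonup> 'v) set \<Rightarrow> bool" where
  "antichain A \<longleftrightarrow> (\<forall>x \<in> A. \<forall>y \<in> A. x \<noteq> y \<longrightarrow> \<not> x \<subseteq>\<^sub>m y \<and> \<not> y \<subseteq>\<^sub>m x)"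

definition streamlined_kappa_souslin_tree :: "'k rel \<Rightarrow> ('k \<rightharpoonup> 'v) set \<Rightarrow> bool" where
  "streamlined_kappa_souslin_tree r T \<longleftrightarrow> streamlined_kappa_tree r T \<and>
     \<not> (\<exists>f :: 'k \<Rightarrow> 'v. \<forall>\<beta> \<in> Field r. (\<lambda>\<gamma>. if \<gamma> \<in> underS r \<beta> then Some (f \<gamma>) else None) \<in> T) \<and>
     \<not> (\<exists>A \<subseteq> T. antichain A \<and> (card_of A, r) \<in> ordIso)"

end

theory Submission imports Defs begin
unbundle cardinal_syntax

lemma wo_of: "kappa_regular_uncountable r \<Longrightarrow> wo_rel r"
  unfolding kappa_regular_uncountable_def wo_rel_def
  using card_order_on_well_order_on by blast

lemma inf_of: "kappa_regular_uncountable r \<Longrightarrow> \<not> finite (Field r)"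
  unfolding kappa_regular_uncountable_def using countable_finite by blast

lemma cr_of: "kappa_regular_uncountable r \<Longrightarrow> Card_order r"
  unfolding kappa_regular_uncountable_def by blast

lemma underS_inj:
  assumes "wo_rel r" "a \<in> Field r" "b \<in> Field r" "underS r a = underS r b"
  shows "a = b"
proof (rule ccontr)
  assume "a \<noteq> b"
  from wo_rel.TOTALS[OF assms(1)] assms(2,3) have "(a,b) \<in> r \<or> (b,a) \<in> r" by blast
  then show False using assms(4) \<open>a \<noteq> b\<close> unfolding underS_def by blast
qed

lemma underS_le:
  assumes "wo_rel r" "a \<in> Field r" "b \<in> Field r" "underS r a \<subseteq> underS r b"
  shows "(a,b) \<in> r"
proof (rule ccontr)
  assume "(a,b) \<notin> r"
  with wo_rel.TOTALS[OF assms(1)] assms(2,3) have "(b,a) \<in> r" "a \<noteq> b" by blast+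
  then have "b \<in> underS r a" unfolding underS_def by auto
  then show False using assms(4) unfolding underS_def by auto
qed

lemma underS_mono:
  assumes "wo_rel r" "(a,b) \<in> r"
  shows "underS r a \<subseteq> underS r b"
proof
  fix c assume "c \<in> underS r a"
  then have "c \<noteq> a" "(c,a) \<in> r" unfolding underS_def by auto
  with assms have "(c,b) \<in> r" using wo_rel.TRANS[OF assms(1)] unfolding trans_def by blast
  moreover have "c \<noteq> b"
  proof
    assume "c = b"
    with \<open>(c,a) \<in> r\<close> assms(2) have "a = b" using wo_rel.ANTISYM[OF assms(1)] unfolding antisym_def by blast
    with \<open>c \<noteq> a\<close> \<open>c = b\<close> show False by simp
  qed
  ultimately show "c \<in> underS r b" unfolding underS_def by auto
qed

lemma map_le_restr: "x \<subseteq>\<^sub>m y \<Longrightarrow> x = y |` dom x"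
  unfolding map_le_def restrict_map_def by (rule ext) (auto simp: domIff)

lemma map_le_eq_dom: "x \<subseteq>\<^sub>m y \<Longrightarrow> dom x = dom y \<Longrightarrow> x = y"
  unfolding map_le_def by (rule ext) (metis domIff)

lemma restr_le: "A \<subseteq> B \<Longrightarrow> y |` A \<subseteq>\<^sub>m y |` B"
  unfolding map_le_def restrict_map_def by (auto simp: domIff split: if_splits)

lemma restr_le2: "y |` A \<subseteq>\<^sub>m y"
  unfolding map_le_def restrict_map_def by (auto simp: domIff split: if_splits)

lemma restr_self: "dom y = underS r b \<Longrightarrow> restr r y b = y"
  unfolding restr_def restrict_map_def
  by (rule ext) (metis (no_types) domIff)

lemma card_T_le:
  assumes kr: "kappa_regular_uncountable r" and T: "streamlined_kappa_tree r T"
  shows "|T| \<le>o r"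
proof -
  have cr: "Card_order r" using cr_of[OF kr] .
  have sub: "T \<subseteq> (\<Union>\<alpha>\<in>Field r. level r T \<alpha>)"
  proof
    fix x assume "x \<in> T"
    then obtain \<alpha> where "node_of_height r \<alpha> x"
      using T unfolding streamlined_kappa_tree_def streamlined_tree_def by blast
    with \<open>x \<in> T\<close> show "x \<in> (\<Union>\<alpha>\<in>Field r. level r T \<alpha>)"
      unfolding level_def node_of_height_def by blast
  qed
  have "|Field r| \<le>o r" using card_of_Field_ordIso[OF cr] by (simp add: ordIso_iff_ordLeq)
  moreover have "\<forall>\<alpha>\<in>Field r. |level r T \<alpha>| \<le>o r"
    using T ordLess_imp_ordLeq unfolding streamlined_kappa_tree_def by metis
  ultimately have "|\<Union>\<alpha>\<in>Field r. level r T \<alpha>| \<le>o r"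
    by (rule card_of_UNION_ordLeq_infinite_Field[OF inf_of[OF kr] cr])
  then show ?thesis by (rule ordLeq_transitive[OF card_of_mono1[OF sub]])
qed

lemma card_ge:
  assumes kr: "kappa_regular_uncountable r" and S: "streamlined_kappa_tree r S"
  shows "r \<le>o |S|"
proof -
  have wo: "wo_rel r" using wo_of[OF kr] .
  have "\<forall>\<alpha>\<in>Field r. \<exists>x. x \<in> level r S \<alpha>"
    using S unfolding streamlined_kappa_tree_def by blast
  then obtain g where g: "\<forall>\<alpha>\<in>Field r. g \<alpha> \<in> level r S \<alpha>" by (rule bchoice[elim_format]) blast
  have "inj_on g (Field r)"
  proof (rule inj_onI)
    fix a b assume "a \<in> Field r" "b \<in> Field r" "g a = g b"
    have "dom (g a) = underS r a" "dom (g b) = underS r b"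
      using g \<open>a \<in> Field r\<close> \<open>b \<in> Field r\<close> unfolding level_def by blast+
    then have "underS r a = underS r b" using \<open>g a = g b\<close> by simp
    then show "a = b" using underS_inj[OF wo] \<open>a \<in> Field r\<close> \<open>b \<in> Field r\<close> by blast
  qed
  moreover have "g ` Field r \<subseteq> S" using g unfolding level_def by blast
  ultimately have "|Field r| \<le>o |S|" using card_of_ordLeq[of "Field r" S] by blast
  moreover have "r =o |Field r|" using card_of_Field_ordIso[OF cr_of[OF kr]] ordIso_symmetric by blast
  ultimately show ?thesis using ordIso_ordLeq_trans by blast
qed

lemma bound_min:
  assumes kr: "kappa_regular_uncountable r" and sT: "streamlined_kappa_souslin_tree r T"
    and sub: "streamlined_kappa_subtree r S T"
  shows "\<exists>a\<in>Field r. \<forall>z\<in>T. \<forall>g. (z \<notin> S \<and> (\<forall>w\<in>T. w \<subseteq>\<^sub>m z \<and> w \<noteq> z \<longrightarrow> w \<in> S) \<and> node_of_height r g z) \<longrightarrow> (g,a) \<in> r"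
proof -
  have wo: "wo_rel r" using wo_of[OF kr] .
  have kT: "streamlined_kappa_tree r T" using sT unfolding streamlined_kappa_souslin_tree_def by blast
  define M where "M = {z\<in>T. z \<notin> S \<and> (\<forall>w\<in>T. w \<subseteq>\<^sub>m z \<and> w \<noteq> z \<longrightarrow> w \<in> S)}"
  have MT: "M \<subseteq> T" unfolding M_def by blast
  have ac: "antichain M" unfolding antichain_def M_def by blast
  have "|M| \<le>o r" by (rule ordLeq_transitive[OF card_of_mono1[OF MT] card_T_le[OF kr kT]])
  moreover have "\<not> |M| =o r" using sT MT ac unfolding streamlined_kappa_souslin_tree_def by blast
  ultimately have Mless: "|M| <o r" using ordLeq_iff_ordLess_or_ordIso by blast
  define H where "H = {g\<in>Field r. \<exists>z\<in>M. dom z = underS r g}"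
  have "\<forall>g\<in>H. \<exists>z. z\<in>M \<and> dom z = underS r g" unfolding H_def by blast
  then obtain f where f: "\<forall>g\<in>H. f g \<in> M \<and> dom (f g) = underS r g" by (rule bchoice[elim_format]) blast
  have "inj_on f H"
  proof (rule inj_onI)
    fix a b assume ab: "a \<in> H" "b \<in> H" "f a = f b"
    have "dom (f a) = underS r a" "dom (f b) = underS r b" using f ab(1,2) by blast+
    then have "underS r a = underS r b" using ab(3) by simp
    moreover have "a \<in> Field r" "b \<in> Field r" using ab(1,2) unfolding H_def by blast+
    ultimately show "a = b" using underS_inj[OF wo] by blast
  qed
  moreover have "f ` H \<subseteq> M" using f by blast
  ultimately have "|H| \<le>o |M|" using card_of_ordLeq[of H M] by blast
  then have Hless: "|H| <o r" using Mless by (rule ordLeq_ordLess_trans)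
  have "\<not> cofinal H r"
  proof
    assume "cofinal H r"
    moreover have "H \<subseteq> Field r" unfolding H_def by blast
    ultimately have "|H| =o r" using kr unfolding kappa_regular_uncountable_def regularCard_def by blast
    then show False using Hless not_ordLess_ordIso by blast
  qed
  then obtain a where a: "a \<in> Field r" "\<forall>b\<in>H. \<not> (a \<noteq> b \<and> (a,b) \<in> r)" unfolding cofinal_def by blast
  show ?thesis
  proof (intro bexI[OF _ a(1)] ballI allI impI)
    fix z g assume zg: "z \<in> T" "z \<notin> S \<and> (\<forall>w\<in>T. w \<subseteq>\<^sub>m z \<and> w \<noteq> z \<longrightarrow> w \<in> S) \<and> node_of_height r g z"
    then have "g \<in> H" unfolding H_def M_def node_of_height_def by blast
    with a(2) have "a = g \<or> (a,g) \<notin> r" by blast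
    moreover have "g \<in> Field r" using zg unfolding node_of_height_def by blast
    ultimately show "(g,a) \<in> r" using wo_rel.TOTALS[OF wo] a(1) by blast
  qed
qed

lemma cone_sub:
  assumes kr: "kappa_regular_uncountable r" and sT: "streamlined_kappa_souslin_tree r T"
    and sub: "streamlined_kappa_subtree r S T"
    and a: "a \<in> Field r"
    and ab: "\<forall>z\<in>T. \<forall>g. (z \<notin> S \<and> (\<forall>w\<in>T. w \<subseteq>\<^sub>m z \<and> w \<noteq> z \<longrightarrow> w \<in> S) \<and> node_of_height r g z) \<longrightarrow> (g,a) \<in> r"
    and x: "x \<in> S" "dom x = underS r a" and y: "y \<in> T" "x \<subseteq>\<^sub>m y"
  shows "y \<in> S"
proof (rule ccontr)
  assume yS: "y \<notin> S"
  have wo: "wo_rel r" using wo_of[OF kr] .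
  have Tt: "streamlined_tree r T" using sT
    unfolding streamlined_kappa_souslin_tree_def streamlined_kappa_tree_def by blast
  have dc: "\<forall>y\<in>S. \<forall>x\<in>T. x \<subseteq>\<^sub>m y \<longrightarrow> x \<in> S" using sub unfolding streamlined_kappa_subtree_def by blast
  obtain \<beta> where \<beta>: "node_of_height r \<beta> y" using Tt y(1) unfolding streamlined_tree_def by blast
  then have \<beta>F: "\<beta> \<in> Field r" "dom y = underS r \<beta>" unfolding node_of_height_def by auto
  have \<beta>\<beta>: "(\<beta>,\<beta>) \<in> r" using wo_rel.TOTALS[OF wo] \<beta>F(1) by blast
  define B where "B = {\<gamma>\<in>Field r. (\<gamma>,\<beta>)\<in>r \<and> restr r y \<gamma> \<notin> S}"
  have "\<beta> \<in> B" unfolding B_def using restr_self[OF \<beta>F(2)] yS \<beta>\<beta> \<beta>F(1) by simp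
  have BF: "B \<subseteq> Field r" unfolding B_def by blast
  define \<gamma>0 where "\<gamma>0 = wo_rel.minim r B"
  have \<gamma>0B: "\<gamma>0 \<in> B" unfolding \<gamma>0_def using wo_rel.minim_in[OF wo BF] \<open>\<beta> \<in> B\<close> by blast
  have \<gamma>0least: "\<forall>\<delta>\<in>B. (\<gamma>0,\<delta>)\<in>r" unfolding \<gamma>0_def using wo_rel.minim_least[OF wo BF] by blast
  have \<gamma>0F: "\<gamma>0 \<in> Field r" "(\<gamma>0,\<beta>) \<in> r" "restr r y \<gamma>0 \<notin> S" using \<gamma>0B unfolding B_def by auto
  define z where "z = restr r y \<gamma>0"
  have zT: "z \<in> T" using Tt y(1) \<beta> \<gamma>0F(2) unfolding streamlined_tree_def z_def by blast
  have zS: "z \<notin> S" using \<gamma>0F(3) unfolding z_def by simp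
  have domz: "dom z = underS r \<gamma>0"
    unfolding z_def restr_def using \<beta>F(2) underS_mono[OF wo \<gamma>0F(2)] by auto
  have zh: "node_of_height r \<gamma>0 z" using domz \<gamma>0F(1) unfolding node_of_height_def by blast
  have zmin: "\<forall>w\<in>T. w \<subseteq>\<^sub>m z \<and> w \<noteq> z \<longrightarrow> w \<in> S"
  proof (intro ballI impI)
    fix w assume w: "w \<in> T" "w \<subseteq>\<^sub>m z \<and> w \<noteq> z"
    obtain \<delta> where "node_of_height r \<delta> w" using Tt w(1) unfolding streamlined_tree_def by blast
    then have \<delta>F: "\<delta> \<in> Field r" "dom w = underS r \<delta>" unfolding node_of_height_def by auto
    have "dom w \<subseteq> dom z" using w(2) map_le_implies_dom_le by blast
    then have \<delta>\<gamma>: "(\<delta>,\<gamma>0) \<in> r" using underS_le[OF wo \<delta>F(1) \<gamma>0F(1)] domz \<delta>F(2) by simp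
    have "\<delta> \<noteq> \<gamma>0"
    proof
      assume "\<delta> = \<gamma>0"
      then have "dom w = dom z" using domz \<delta>F(2) by simp
      then have "w = z" using map_le_eq_dom w(2) by blast
      with w(2) show False by simp
    qed
    have "w = z |` dom w" using map_le_restr w(2) by blast
    also have "\<dots> = y |` (underS r \<gamma>0 \<inter> underS r \<delta>)" unfolding z_def restr_def \<delta>F(2) by simp
    also have "underS r \<gamma>0 \<inter> underS r \<delta> = underS r \<delta>" using underS_mono[OF wo \<delta>\<gamma>] by blast
    finally have wr: "w = restr r y \<delta>" unfolding restr_def .
    have "(\<delta>,\<beta>) \<in> r" using \<delta>\<gamma> \<gamma>0F(2) wo_rel.TRANS[OF wo] unfolding trans_def by blast
    show "w \<in> S"
    proof (rule ccontr)
      assume "w \<notin> S"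
      then have "\<delta> \<in> B" unfolding B_def using wr \<delta>F(1) \<open>(\<delta>,\<beta>) \<in> r\<close> by simp
      then have "(\<gamma>0,\<delta>) \<in> r" using \<gamma>0least by blast
      then have "\<delta> = \<gamma>0" using \<delta>\<gamma> wo_rel.ANTISYM[OF wo] unfolding antisym_def by blast
      with \<open>\<delta> \<noteq> \<gamma>0\<close> show False by simp
    qed
  qed
  have "(\<gamma>0,a) \<in> r" using ab zT zS zmin zh by blast
  have "x = y |` dom x" using map_le_restr[OF y(2)] .
  then have "x = y |` underS r a" using x(2) by simp
  then have "z \<subseteq>\<^sub>m x" using restr_le[OF underS_mono[OF wo \<open>(\<gamma>0,a) \<in> r\<close>]] unfolding z_def restr_def by simp
  then have "z \<in> S" using dc x(1) zT by blast
  with zS show False by simp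
qed

lemma good_node:
  assumes kr: "kappa_regular_uncountable r" and sT: "streamlined_kappa_souslin_tree r T"
    and sub: "streamlined_kappa_subtree r S T"
  shows "\<exists>x\<in>S. \<not> |{y\<in>T. x \<subseteq>\<^sub>m y}| <o r \<and> {y\<in>T. x \<subseteq>\<^sub>m y} \<subseteq> S"
proof -
  have wo: "wo_rel r" using wo_of[OF kr] .
  have cr: "Card_order r" using cr_of[OF kr] .
  have inf: "\<not> finite (Field r)" using inf_of[OF kr] .
  have kT: "streamlined_kappa_tree r T" using sT unfolding streamlined_kappa_souslin_tree_def by blast
  have kS: "streamlined_kappa_tree r S" using sub unfolding streamlined_kappa_subtree_def by blast
  have ST: "S \<subseteq> T" using sub unfolding streamlined_kappa_subtree_def by blast
  obtain a where a: "a \<in> Field r"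
    and ab: "\<forall>z\<in>T. \<forall>g. (z \<notin> S \<and> (\<forall>w\<in>T. w \<subseteq>\<^sub>m z \<and> w \<noteq> z \<longrightarrow> w \<in> S) \<and> node_of_height r g z) \<longrightarrow> (g,a) \<in> r"
    using bound_min[OF kr sT sub] by blast
  have C: "\<forall>x\<in>S. dom x = underS r a \<longrightarrow> {y\<in>T. x \<subseteq>\<^sub>m y} \<subseteq> S"
    using cone_sub[OF kr sT sub a ab] by blast
  have "\<exists>x\<in>level r S a. \<not> |{y\<in>T. x \<subseteq>\<^sub>m y}| <o r"
  proof (rule ccontr)
    assume "\<not> (\<exists>x\<in>level r S a. \<not> |{y\<in>T. x \<subseteq>\<^sub>m y}| <o r)"
    then have cs: "\<And>x. x\<in>level r S a \<Longrightarrow> |{y\<in>T. x \<subseteq>\<^sub>m y}| <o r" by blast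
    define L where "L = (\<Union>\<gamma>\<in>underS r a. level r T \<gamma>)"
    define U where "U = (\<Union>x\<in>level r S a. {y\<in>T. x \<subseteq>\<^sub>m y})"
    have st: "stable r" using regularCard_stable[OF cr inf] kr unfolding kappa_regular_uncountable_def by blast
    have lT: "\<And>\<gamma>. \<gamma> \<in> underS r a \<Longrightarrow> |level r T \<gamma>| <o r"
    proof -
      fix \<gamma> assume "\<gamma> \<in> underS r a"
      then have "\<gamma> \<in> Field r" unfolding underS_def Field_def by blast
      then show "|level r T \<gamma>| <o r" using kT unfolding streamlined_kappa_tree_def by blast
    qed
    have Ll: "|L| <o r" unfolding L_def by (rule stable_UNION[OF st card_of_underS[OF cr a] lT])
    have lS: "|level r S a| <o r" using kS a unfolding streamlined_kappa_tree_def by blast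
    have Ul: "|U| <o r" unfolding U_def by (rule stable_UNION[OF st lS cs])
    have LU: "|L \<union> U| <o r" by (rule card_of_Un_ordLess_infinite_Field[OF inf cr Ll Ul])
    have "S \<subseteq> L \<union> U"
    proof
      fix y assume yS: "y \<in> S"
      have yT: "y \<in> T" using yS ST by blast
      obtain \<beta> where \<beta>: "node_of_height r \<beta> y"
        using kS yS unfolding streamlined_kappa_tree_def streamlined_tree_def by blast
      then have \<beta>F: "\<beta> \<in> Field r" "dom y = underS r \<beta>" unfolding node_of_height_def by auto
      show "y \<in> L \<union> U"
      proof (cases "(\<beta>,a)\<in>r \<and> \<beta> \<noteq> a")
        case True
        then have "\<beta> \<in> underS r a" unfolding underS_def by blast
        moreover have "y \<in> level r T \<beta>" using yT \<beta>F(2) unfolding level_def by blast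
        ultimately show ?thesis unfolding L_def by blast
      next
        case False
        then have a\<beta>: "(a,\<beta>) \<in> r" using wo_rel.TOTALS[OF wo] a \<beta>F(1) by blast
        define x where "x = restr r y a"
        have "x \<in> S" using kS yS \<beta> a\<beta> unfolding streamlined_kappa_tree_def streamlined_tree_def x_def by blast
        moreover have "dom x = underS r a"
          unfolding x_def restr_def using \<beta>F(2) underS_mono[OF wo a\<beta>] by auto
        ultimately have "x \<in> level r S a" unfolding level_def by blast
        moreover have "x \<subseteq>\<^sub>m y" unfolding x_def restr_def by (rule restr_le2)
        ultimately show ?thesis unfolding U_def using yT by blast
      qed
    qed
    then have "|S| <o r" using ordLeq_ordLess_trans[OF card_of_mono1 LU] by blast
    with card_ge[OF kr kS] show False using not_ordLess_ordLeq by blast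
  qed
  then obtain x where "x\<in>level r S a" "\<not> |{y\<in>T. x \<subseteq>\<^sub>m y}| <o r" by blast
  then show ?thesis using C unfolding level_def by blast
qed

theorem proposition5p4:
  fixes r :: "'k rel" and T :: "('k \<rightharpoonup> 'v) set" and Ts :: "'k \<Rightarrow> ('k \<rightharpoonup> 'v) set"
  assumes "kappa_regular_uncountable r"
    and "streamlined_kappa_souslin_tree r T"
    and "\<forall>\<eta> \<in> Field r. streamlined_kappa_subtree r (Ts \<eta>) T"
  shows "\<exists>\<eta> \<in> Field r. \<exists>\<rho> \<in> Field r. (\<eta>, \<rho>) \<in> r \<and> \<eta> \<noteq> \<rho> \<and>
           (card_of (Ts \<eta> \<inter> Ts \<rho>), r) \<in> ordIso"
proof -
  note kr = assms(1) and sT = assms(2)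
  have wo: "wo_rel r" using wo_of[OF kr] .
  have cr: "Card_order r" using cr_of[OF kr] .
  have kT: "streamlined_kappa_tree r T" using sT unfolding streamlined_kappa_souslin_tree_def by blast
  have "\<forall>\<eta>\<in>Field r. \<exists>x. x \<in> Ts \<eta> \<and> \<not> |{y\<in>T. x \<subseteq>\<^sub>m y}| <o r \<and> {y\<in>T. x \<subseteq>\<^sub>m y} \<subseteq> Ts \<eta>"
    using good_node[OF kr sT] assms(3) by blast
  then obtain xs where xs: "\<forall>\<eta>\<in>Field r. xs \<eta> \<in> Ts \<eta> \<and> \<not> |{y\<in>T. xs \<eta> \<subseteq>\<^sub>m y}| <o r \<and> {y\<in>T. xs \<eta> \<subseteq>\<^sub>m y} \<subseteq> Ts \<eta>"
    by (rule bchoice[elim_format]) blast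
  have "\<exists>\<eta>\<in>Field r. \<exists>\<rho>\<in>Field r. \<eta> \<noteq> \<rho> \<and> xs \<eta> \<subseteq>\<^sub>m xs \<rho>"
  proof (rule ccontr)
    assume na: "\<not> (\<exists>\<eta>\<in>Field r. \<exists>\<rho>\<in>Field r. \<eta> \<noteq> \<rho> \<and> xs \<eta> \<subseteq>\<^sub>m xs \<rho>)"
    have inj: "inj_on xs (Field r)"
    proof (rule inj_onI)
      fix a b assume "a \<in> Field r" "b \<in> Field r" "xs a = xs b"
      show "a = b"
      proof (rule ccontr)
        assume "a \<noteq> b"
        have "xs a \<subseteq>\<^sub>m xs b" using \<open>xs a = xs b\<close> map_le_refl by simp
        then show False using na \<open>a \<in> Field r\<close> \<open>b \<in> Field r\<close> \<open>a \<noteq> b\<close> by auto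
      qed
    qed
    have ac: "antichain (xs ` Field r)" unfolding antichain_def
    proof (intro ballI impI)
      fix x y assume "x \<in> xs ` Field r" "y \<in> xs ` Field r" "x \<noteq> y"
      then obtain a b where "a \<in> Field r" "b \<in> Field r" "x = xs a" "y = xs b" "a \<noteq> b" by blast
      moreover have "\<not> xs a \<subseteq>\<^sub>m xs b" using na \<open>a \<in> Field r\<close> \<open>b \<in> Field r\<close> \<open>a \<noteq> b\<close> by auto
      moreover have "\<not> xs b \<subseteq>\<^sub>m xs a" using na \<open>a \<in> Field r\<close> \<open>b \<in> Field r\<close> \<open>a \<noteq> b\<close> by auto
      ultimately show "\<not> x \<subseteq>\<^sub>m y \<and> \<not> y \<subseteq>\<^sub>m x" by simp
    qed
    have sub: "xs ` Field r \<subseteq> T"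
      using xs assms(3) unfolding streamlined_kappa_subtree_def by blast
    have "|Field r| =o |xs ` Field r|" using card_of_ordIso inj_on_imp_bij_betw[OF inj] by blast
    then have "|xs ` Field r| =o r"
      using ordIso_symmetric ordIso_transitive card_of_Field_ordIso[OF cr] by blast
    then show False using sT ac sub unfolding streamlined_kappa_souslin_tree_def by blast
  qed
  then obtain \<eta> \<rho> where er: "\<eta> \<in> Field r" "\<rho> \<in> Field r" "\<eta> \<noteq> \<rho>" "xs \<eta> \<subseteq>\<^sub>m xs \<rho>" by blast
  have "{y\<in>T. xs \<rho> \<subseteq>\<^sub>m y} \<subseteq> {y\<in>T. xs \<eta> \<subseteq>\<^sub>m y}" using er(4) map_le_trans by blast
  then have csub: "{y\<in>T. xs \<rho> \<subseteq>\<^sub>m y} \<subseteq> Ts \<eta> \<inter> Ts \<rho>" using xs er(1,2) by blast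
  have int_sym: "Ts \<eta> \<inter> Ts \<rho> = Ts \<rho> \<inter> Ts \<eta>" by blast
  have nl: "\<not> |Ts \<eta> \<inter> Ts \<rho>| <o r"
  proof
    assume "|Ts \<eta> \<inter> Ts \<rho>| <o r"
    then have "|{y\<in>T. xs \<rho> \<subseteq>\<^sub>m y}| <o r" using ordLeq_ordLess_trans[OF card_of_mono1[OF csub]] by blast
    then show False using xs er(2) by blast
  qed
  have "Ts \<eta> \<inter> Ts \<rho> \<subseteq> T" using assms(3) er(1) unfolding streamlined_kappa_subtree_def by blast
  then have "|Ts \<eta> \<inter> Ts \<rho>| \<le>o r" by (rule ordLeq_transitive[OF card_of_mono1 card_T_le[OF kr kT]])
  then have iso: "|Ts \<eta> \<inter> Ts \<rho>| =o r" using nl ordLeq_iff_ordLess_or_ordIso by blast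
  have "(\<eta>,\<rho>) \<in> r \<or> (\<rho>,\<eta>) \<in> r" using wo_rel.TOTALS[OF wo] er(1,2) by blast
  then show ?thesis
  proof
    assume "(\<eta>,\<rho>) \<in> r" then show ?thesis using er iso by blast
  next
    assume "(\<rho>,\<eta>) \<in> r" then show ?thesis using er iso int_sym by metis
  qed
qed

end
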